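(* Let $K\subseteq\mathbb{R}^n$ be a proper cone and let $A\in\mathbb{R}^{n\times n}$ be $K$-monotone. Let $A=U-V$ be a $K$-regular splitting. Let $U=F-G=\overline{F}-\overline{G}$ be two $K$-weak regular splittings of type II of $U$ such that $VF^{-1}G=GF^{-1}V$ and $V\overline{F}^{-1}\overline{G}=\overline{G}\,\overline{F}^{-1}V$. For a positive integer $s$ define $$T_{s}=(F^{-1}G)^{s}+\sum_{j=0}^{s-1}(F^{-1}G)^{j}F^{-1}V,\qquad \overline{T}_{s}=(\overline{F}^{-1}\overline{G})^{s}+\sum_{j=0}^{s-1}(\overline{F}^{-1}\overline{G})^{j}\overline{F}^{-1}V,$$ $$\widehat{T}_{s}=(GF^{-1})^{s}+\sum_{j=0}^{s-1}(GF^{-1})^{j}VF^{-1},\qquad \widehat{\overline{T}}_{s}=(\overline{G}\,\overline{F}^{-1})^{s}+\sum_{j=0}^{s-1}(\overline{G}\,\overline{F}^{-1})^{j}V\overline{F}^{-1},$$ and let $P_s,\overline{P}_s$ be the matrices with $P_s^{-1}=\sum_{j=0}^{s-1}(F^{-1}G)^jF^{-1}$ and $\overline{P}_s^{-1}=\sum_{j=0}^{s-1}(\overline{F}^{-1}\overline{G})^j\overline{F}^{-1}$. Then $\rho(T_s)\leq\rho(\overline{T}_s)<1$, provided any one of the following conditions holds: (i) $\overline{G}\,\overline{F}^{-1}\geq_K GF^{-1}$ and $\widehat{T}_sP_s\geq_K 0$; (ii) $\widehat{\overline{T}}_s\overline{P}_s\geq_K \widehat{T}_sP_s$.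
   Context: A proper cone $K\subseteq\mathbb{R}^n$ is a closed, convex, pointed, solid cone. For $M\in\mathbb{R}^{n\times n}$, $M\geq_K 0$ means $MK\subseteq K$, and $M\geq_K N$ means $M-N\geq_K0$. A matrix $A$ is $K$-monotone if $A$ is nonsingular and $A^{-1}\geq_K 0$. A splitting $A=U-V$ (with $U$ nonsingular) is $K$-regular if $U^{-1}\geq_K 0$ and $V\geq_K 0$; it is a $K$-weak regular splitting of type II if $U^{-1}\geq_K 0$ and $VU^{-1}\geq_K 0$. $\rho$ denotes spectral radius. *)

theory Defs
  imports "HOL-Analysis.Analysis"
begin

definition proper_cone :: "(real^'n) set \<Rightarrow> bool" where
  "proper_cone K \<longleftrightarrow> cone K \<and> convex K \<and> closed K \<and>
     K \<inter> uminus ` K = {0} \<and> interior K \<noteq> {}"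

definition K_nonneg :: "(real^'n) set \<Rightarrow> real^'n^'n \<Rightarrow> bool" where
  "K_nonneg K M \<longleftrightarrow> (\<forall>x\<in>K. M *v x \<in> K)"

definition K_geq :: "(real^'n) set \<Rightarrow> real^'n^'n \<Rightarrow> real^'n^'n \<Rightarrow> bool" where
  "K_geq K M N \<longleftrightarrow> K_nonneg K (M - N)"

definition K_monotone :: "(real^'n) set \<Rightarrow> real^'n^'n \<Rightarrow> bool" where
  "K_monotone K A \<longleftrightarrow> invertible A \<and> K_nonneg K (matrix_inv A)"

definition K_regular_splitting ::
  "(real^'n) set \<Rightarrow> real^'n^'n \<Rightarrow> real^'n^'n \<Rightarrow> real^'n^'n \<Rightarrow> bool" where
  "K_regular_splitting K A U V \<longleftrightarrow> A = U - V \<and> invertible U \<and>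
     K_nonneg K (matrix_inv U) \<and> K_nonneg K V"

definition K_weak_regular_splitting_II ::
  "(real^'n) set \<Rightarrow> real^'n^'n \<Rightarrow> real^'n^'n \<Rightarrow> real^'n^'n \<Rightarrow> bool" where
  "K_weak_regular_splitting_II K A U V \<longleftrightarrow> A = U - V \<and> invertible U \<and>
     K_nonneg K (matrix_inv U) \<and> K_nonneg K (V ** matrix_inv U)"

text \<open>Matrix power (the ring multiplication on vec types is componentwise,
  so we use matrix product explicitly).\<close>
primrec matpow :: "real^'n^'n \<Rightarrow> nat \<Rightarrow> real^'n^'n" where
  "matpow A 0 = mat 1"
| "matpow A (Suc k) = A ** matpow A k"

definition spectral_radius :: "real^'n^'n \<Rightarrow> real" where
  "spectral_radius A = Max {cmod l | l. \<exists>v::complex^'n. v \<noteq> 0 \<and>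
      (\<chi> i j. complex_of_real (A $ i $ j)) *v v = l *s v}"

end

theory Submission
  imports Defs
begin


section \<open>Cone basics\<close>

lemma pc_scale: "proper_cone K \<Longrightarrow> x \<in> K \<Longrightarrow> 0 \<le> c \<Longrightarrow> c *\<^sub>R x \<in> K"
  unfolding proper_cone_def cone_def by blast

lemma pc_convex: "proper_cone K \<Longrightarrow> convex K"
  unfolding proper_cone_def by blast

lemma pc_closed: "proper_cone K \<Longrightarrow> closed K"
  unfolding proper_cone_def by blast

lemma pc_add: assumes "proper_cone K" "x \<in> K" "y \<in> K" shows "x + y \<in> K"
proof -
  have "(1/2) *\<^sub>R x + (1/2) *\<^sub>R y \<in> K"
    using convexD[OF pc_convex[OF assms(1)] assms(2,3), of "1/2" "1/2"] by simp
  from pc_scale[OF assms(1) this, of 2] show ?thesis by (simp add: scaleR_add_right)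
qed

lemma pc_int_ne: "proper_cone K \<Longrightarrow> interior K \<noteq> {}"
  unfolding proper_cone_def by blast

lemma pc_zero: assumes "proper_cone K" shows "0 \<in> K"
proof -
  obtain e where "e \<in> interior K" using pc_int_ne[OF assms] by blast
  then have "e \<in> K" using interior_subset by blast
  from pc_scale[OF assms this, of 0] show ?thesis by simp
qed

lemma pc_pointed: assumes "proper_cone K" "x \<in> K" "- x \<in> K" shows "x = 0"
proof -
  have "x \<in> uminus ` K" using assms(3) by (metis image_eqI minus_minus)
  then show ?thesis using assms(1,2) unfolding proper_cone_def by blast
qed

lemma pc_sum: assumes "proper_cone K" "\<And>i. i \<in> S \<Longrightarrow> f i \<in> K" shows "sum f S \<in> K"
  using assms(2)
proof (induction S rule: infinite_finite_induct)
  case (infinite A) then show ?case using pc_zero[OF assms(1)] by simp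
next
  case empty then show ?case using pc_zero[OF assms(1)] by simp
next
  case (insert x F) then show ?case using pc_add[OF assms(1)] by simp
qed

lemma pc_diff_trans: assumes "proper_cone K" "a - b \<in> K" "b - c \<in> K" shows "a - c \<in> K"
  using pc_add[OF assms] by (simp add: algebra_simps)

lemma pc_int_add: assumes "proper_cone K" "x \<in> K" "y \<in> interior K" shows "x + y \<in> interior K"
proof -
  obtain d where d: "d > 0" "ball y d \<subseteq> K" using assms(3) mem_interior by blast
  have "ball (x + y) d \<subseteq> K"
  proof
    fix w assume "w \<in> ball (x + y) d"
    then have "w - x \<in> ball y d" by (simp add: dist_norm algebra_simps)
    then have "w - x \<in> K" using d by blast
    from pc_add[OF assms(1) assms(2) this] show "w \<in> K" by simp
  qed
  then show ?thesis using d mem_interior by blast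
qed

lemma pc_int_scale: assumes "proper_cone K" "c > 0" "y \<in> interior K" shows "c *\<^sub>R y \<in> interior K"
proof -
  obtain d where d: "d > 0" "ball y d \<subseteq> K" using assms(3) mem_interior by blast
  have "ball (c *\<^sub>R y) (c * d) \<subseteq> K"
  proof
    fix w assume w: "w \<in> ball (c *\<^sub>R y) (c * d)"
    have e1: "y - (1/c) *\<^sub>R w = (1/c) *\<^sub>R (c *\<^sub>R y - w)" using assms(2) by (simp add: algebra_simps)
    have "dist y ((1/c) *\<^sub>R w) = (1/c) * dist (c *\<^sub>R y) w"
      unfolding dist_norm e1 using assms(2) by simp
    also have "\<dots> < (1/c) * (c * d)" using w assms(2) by (simp add: dist_commute divide_simps mult.commute)
    finally have "(1/c) *\<^sub>R w \<in> ball y d" using assms(2) by simp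
    then have "(1/c) *\<^sub>R w \<in> K" using d by blast
    from pc_scale[OF assms(1) this, of c] show "w \<in> K" using assms(2) by simp
  qed
  then show ?thesis using d assms(2) mem_interior by (metis mult_pos_pos)
qed

lemma pc_int_nz: assumes "proper_cone K" "(y::real^'n) \<in> interior K" shows "y \<noteq> 0"
proof
  assume "y = 0"
  then obtain d where d: "d > 0" "ball 0 d \<subseteq> K" using assms(2) mem_interior by blast
  obtain i :: 'n where True by blast
  define v :: "real^'n" where "v = (d/2) *\<^sub>R axis i 1"
  have nv: "norm v = d/2" using d by (simp add: v_def)
  have "v \<in> K" "-v \<in> K" using d nv by (auto intro!: subsetD[OF d(2)])
  then have "v = 0" using pc_pointed[OF assms(1)] by blast
  then show False using nv d by simp
qed

lemma pc_dominate: assumes "proper_cone K" "y \<in> interior K"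
  shows "\<exists>c>0. c *\<^sub>R y - w \<in> K \<and> c *\<^sub>R y + w \<in> K"
proof (cases "w = 0")
  case True
  then show ?thesis using assms interior_subset by (intro exI[of _ 1]) auto
next
  case False
  obtain d where d: "d > 0" "ball y d \<subseteq> K" using assms(2) mem_interior by blast
  define s where "s = d / (2 * norm w)"
  have s: "s > 0" using d False by (simp add: s_def)
  have ns: "norm (s *\<^sub>R w) = d/2" using d False by (simp add: s_def)
  have "y - s *\<^sub>R w \<in> K" "y + s *\<^sub>R w \<in> K"
    using d ns by (auto intro!: subsetD[OF d(2)] simp: dist_norm)
  then have "(1/s) *\<^sub>R (y - s *\<^sub>R w) \<in> K" "(1/s) *\<^sub>R (y + s *\<^sub>R w) \<in> K"
    using pc_scale[OF assms(1)] s by auto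
  then show ?thesis using s by (intro exI[of _ "1/s"]) (simp add: algebra_simps)
qed

lemma pc_normal: assumes "proper_cone (K::(real^'n) set)"
  shows "\<exists>N>0. \<forall>a z. a - z \<in> K \<longrightarrow> a + z \<in> K \<longrightarrow> norm z \<le> N * norm a"
proof (rule ccontr)
  assume "\<not> ?thesis"
  then have "\<forall>k. \<exists>a z. a - z \<in> K \<and> a + z \<in> K \<and> norm z > real (Suc k) * norm a"
    by (metis not_le of_nat_0_less_iff zero_less_Suc)
  then obtain a z where az: "\<And>k. a k - z k \<in> K" "\<And>k. a k + z k \<in> K"
    "\<And>k. norm (z k) > real (Suc k) * norm (a k)" by metis
  define z' where "z' k = (1 / norm (z k)) *\<^sub>R z k" for k
  define a' where "a' k = (1 / norm (z k)) *\<^sub>R a k" for k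
  have nz: "norm (z k) > 0" for k using az(3)[of k] 
    by (smt (verit, ccfv_SIG) mult_nonneg_nonneg norm_ge_zero of_nat_0_le_iff)
  have z'1: "z' k \<in> sphere 0 1" for k using nz[of k] by (simp add: z'_def)
  have a'K: "a' k - z' k \<in> K" "a' k + z' k \<in> K" for k
    using pc_scale[OF assms az(1)[of k], of "1 / norm (z k)"] 
      pc_scale[OF assms az(2)[of k], of "1 / norm (z k)"]
    by (simp_all add: a'_def z'_def scaleR_diff_right scaleR_add_right)
  have a'b: "norm (a' k) \<le> 1 / real (Suc k)" for k
  proof -
    have "norm (a' k) = norm (a k) / norm (z k)" by (simp add: a'_def)
    also have "\<dots> \<le> 1 / real (Suc k)"
      using az(3)[of k] nz[of k] by (simp add: divide_simps mult.commute)
    finally show ?thesis .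
  qed
  obtain l r where l: "l \<in> sphere 0 1" and r: "strict_mono r" and lim: "(z' \<circ> r) \<longlonglongrightarrow> l"
    using compact_imp_seq_compact[OF compact_sphere, of 0 1] z'1 unfolding seq_compact_def by metis
  have "a' \<longlonglongrightarrow> 0"
  proof (rule tendsto_norm_zero_cancel)
    show "(\<lambda>k. norm (a' k)) \<longlonglongrightarrow> 0"
    proof (rule real_tendsto_sandwich[of "\<lambda>_. 0" _ _ "\<lambda>k. 1 / real (Suc k)"])
      show "\<forall>\<^sub>F n in sequentially. 0 \<le> norm (a' n)" by simp
      show "\<forall>\<^sub>F n in sequentially. norm (a' n) \<le> 1 / real (Suc n)" using a'b by simp
      show "(\<lambda>n. 1 / real (Suc n)) \<longlonglongrightarrow> 0" using LIMSEQ_inverse_real_of_nat by (simp add: inverse_eq_divide)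
    qed simp
  qed
  then have a'r: "(a' \<circ> r) \<longlonglongrightarrow> 0" using LIMSEQ_subseq_LIMSEQ r by blast
  have "(\<lambda>k. (a' \<circ> r) k + (z' \<circ> r) k) \<longlonglongrightarrow> 0 + l" by (intro tendsto_intros a'r lim)
  then have "l \<in> K" using closed_sequentially[OF pc_closed[OF assms], of "\<lambda>k. (a' \<circ> r) k + (z' \<circ> r) k"] a'K by auto
  moreover have "(\<lambda>k. (a' \<circ> r) k - (z' \<circ> r) k) \<longlonglongrightarrow> 0 - l" by (intro tendsto_intros a'r lim)
  then have "-l \<in> K" using closed_sequentially[OF pc_closed[OF assms], of "\<lambda>k. (a' \<circ> r) k - (z' \<circ> r) k"] a'K by auto
  ultimately have "l = 0" using pc_pointed[OF assms] by blast
  then show False using l by simp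
qed



section \<open>Matrices\<close>

lemma minv: assumes "invertible (M::real^'n^'n)"
  shows "M ** matrix_inv M = mat 1" "matrix_inv M ** M = mat 1"
proof -
  have "\<exists>A'. M ** A' = mat 1 \<and> A' ** M = mat 1" using assms unfolding invertible_def by blast
  then have "M ** matrix_inv M = mat 1 \<and> matrix_inv M ** M = mat 1"
    unfolding matrix_inv_def by (rule someI_ex)
  then show "M ** matrix_inv M = mat 1" "matrix_inv M ** M = mat 1" by auto
qed

lemma minv_unique: assumes "(M::real^'n^'n) ** N = mat 1" shows "matrix_inv M = N" "invertible M"
proof -
  have NM: "N ** M = mat 1" using assms matrix_left_right_inverse by blast
  show inv: "invertible M" using assms NM unfolding invertible_def by blast
  have "matrix_inv M = matrix_inv M ** (M ** N)" using assms by simp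
  also have "\<dots> = N" using minv(2)[OF inv] by (simp add: matrix_mul_assoc)
  finally show "matrix_inv M = N" .
qed

lemma invertible_ker: "(\<And>x. (M::real^'n^'n) *v x = 0 \<Longrightarrow> x = 0) \<Longrightarrow> invertible M"
  using matrix_left_invertible_ker invertible_left_inverse by blast

lemma mm_diff_l: "(A::'a::comm_ring_1^'n^'m) ** (B - C) = A ** B - A ** C"
  by (simp add: matrix_matrix_mult_def vec_eq_iff sum_subtractf algebra_simps)
lemma mm_diff_r: "((A::'a::comm_ring_1^'n^'m) - B) ** C = A ** C - B ** C"
  by (simp add: matrix_matrix_mult_def vec_eq_iff sum_subtractf algebra_simps)
lemma mm_add_r: "((A::'a::comm_ring_1^'n^'m) + B) ** C = A ** C + B ** C"
  by (simp add: matrix_matrix_mult_def vec_eq_iff sum.distrib algebra_simps)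
lemma mm_sum_l: "(A::'a::comm_ring_1^'n^'m) ** (\<Sum>l\<in>L. f l) = (\<Sum>l\<in>L. A ** f l)"
  by (induction L rule: infinite_finite_induct) (auto simp: matrix_add_ldistrib)
lemma mm_sum_r: "(\<Sum>l\<in>L. f l) ** (A::'a::comm_ring_1^'n^'m) = (\<Sum>l\<in>L. f l ** A)"
  by (induction L rule: infinite_finite_induct) (auto simp: mm_add_r)
lemma smult_sum: "(c::'a::comm_ring_1) *s (\<Sum>l\<in>L. f l) = (\<Sum>l\<in>L. c *s f l)"
  by (induction L rule: infinite_finite_induct) (auto simp: vector_add_ldistrib)

lemma Kn_mult: "K_nonneg K A \<Longrightarrow> K_nonneg K B \<Longrightarrow> K_nonneg K (A ** B)"
  unfolding K_nonneg_def by (simp flip: matrix_vector_mul_assoc)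

lemma Kn_add: "proper_cone K \<Longrightarrow> K_nonneg K A \<Longrightarrow> K_nonneg K B \<Longrightarrow> K_nonneg K (A + B)"
  unfolding K_nonneg_def by (simp add: matrix_vector_mult_add_rdistrib pc_add)

lemma Kn_one: "K_nonneg K (mat 1)"
  unfolding K_nonneg_def by simp

lemma Kn_sum: assumes "proper_cone K" "\<And>i. i \<in> S \<Longrightarrow> K_nonneg K (f i)" shows "K_nonneg K (sum f S)"
  using assms(2)
proof (induction S rule: infinite_finite_induct)
  case (infinite A) then show ?case using pc_zero[OF assms(1)] by (simp add: K_nonneg_def)
next
  case empty then show ?case using pc_zero[OF assms(1)] by (simp add: K_nonneg_def)
next
  case (insert x F) then show ?case using Kn_add[OF assms(1)] by simp
qed

lemma Kn_pow: "K_nonneg K A \<Longrightarrow> K_nonneg K (matpow A k)"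
  by (induction k) (auto simp: Kn_one Kn_mult)

lemma Kn_geq_pow: assumes K: "proper_cone K" and "K_nonneg K B" "K_geq K A B"
  shows "K_geq K (matpow A k) (matpow B k)"
proof (induction k)
  case 0 then show ?case using pc_zero[OF K] by (simp add: K_geq_def K_nonneg_def)
next
  case (Suc k)
  have An: "K_nonneg K A"
  proof -
    have "A = (A - B) + B" by simp
    then show ?thesis using Kn_add[OF K, of "A - B" B] assms(2,3) unfolding K_geq_def by metis
  qed
  have "matpow A (Suc k) - matpow B (Suc k) = A ** (matpow A k - matpow B k) + (A - B) ** matpow B k"
    by (simp add: mm_diff_l mm_diff_r algebra_simps)
  moreover have "K_nonneg K (A ** (matpow A k - matpow B k) + (A - B) ** matpow B k)"
    using Suc An assms(2,3) by (intro Kn_add[OF K] Kn_mult Kn_pow) (auto simp: K_geq_def)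
  ultimately show ?case by (simp add: K_geq_def)
qed

section \<open>Complexification and eigenvalues\<close>

definition cmat :: "real^'n^'n \<Rightarrow> complex^'n^'n" where
  "cmat A = (\<chi> i j. complex_of_real (A $ i $ j))"

definition cvec :: "real^'n \<Rightarrow> complex^'n" where
  "cvec x = (\<chi> i. complex_of_real (x $ i))"

definition eigs :: "real^'n^'n \<Rightarrow> complex set" where
  "eigs A = {l. \<exists>v. v \<noteq> 0 \<and> cmat A *v v = l *s v}"

lemma sr_def2: "spectral_radius A = Max (cmod ` eigs A)"
  unfolding spectral_radius_def eigs_def cmat_def by (simp add: image_Collect)

lemma cmat_mult: "cmat (A ** B) = cmat A ** cmat B"
  by (simp add: cmat_def matrix_matrix_mult_def vec_eq_iff)

lemma cmat_cvec: "cmat A *v cvec x = cvec (A *v x)"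
  by (simp add: cmat_def cvec_def matrix_vector_mult_def vec_eq_iff)

lemma cvec_nz: "x \<noteq> 0 \<Longrightarrow> cvec x \<noteq> 0"
  by (simp add: cvec_def vec_eq_iff)

lemma cmat_one: "cmat (mat 1) = mat 1"
  by (simp add: cmat_def mat_def vec_eq_iff)

lemma mv_smult: "(M::'a::comm_ring_1^'n^'m) *v (c *s v) = c *s (M *v v)"
  by (simp add: matrix_vector_mult_def vec_eq_iff sum_distrib_left mult.left_commute)

lemma mv_sum: "(M::'a::comm_ring_1^'n^'m) *v (\<Sum>l\<in>L. f l) = (\<Sum>l\<in>L. M *v f l)"
  by (induction L rule: infinite_finite_induct) (auto simp: matrix_vector_right_distrib)

lemma real_eig: "x \<noteq> 0 \<Longrightarrow> A *v x = m *\<^sub>R x \<Longrightarrow> complex_of_real m \<in> eigs A"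
  unfolding eigs_def
  by (intro CollectI exI[of _ "cvec x"]) 
     (auto simp: cvec_nz cmat_cvec, simp add: cvec_def vec_eq_iff)

lemma similar_eigs: fixes S :: "real^'n^'n" assumes "S ** X = Y ** S" "invertible S"
  shows "eigs X \<subseteq> eigs Y"
proof
  fix l assume "l \<in> eigs X"
  then obtain v where v: "v \<noteq> 0" "cmat X *v v = l *s v" unfolding eigs_def by blast
  obtain S' where S': "S' ** S = mat 1" using assms(2) invertible_left_inverse by blast
  have "cmat S' ** cmat S = mat 1" using S' by (simp flip: cmat_mult add: cmat_one)
  then have w: "cmat S *v v \<noteq> 0" using v(1) 
    by (metis matrix_vector_mul_assoc matrix_vector_mul_lid matrix_vector_mult_0_right)
  have "cmat Y *v (cmat S *v v) = cmat S *v (cmat X *v v)"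
    by (simp add: matrix_vector_mul_assoc flip: cmat_mult assms(1))
  also have "\<dots> = l *s (cmat S *v v)" using v(2) by (simp add: mv_smult)
  finally show "l \<in> eigs Y" using w unfolding eigs_def by blast
qed



lemma eig_indep:
  fixes M :: "complex^'n^'n"
  assumes "finite L" "\<And>l. l \<in> L \<Longrightarrow> ev l \<noteq> 0 \<and> M *v ev l = l *s ev l"
  shows "\<forall>c. (\<Sum>l\<in>L. c l *s ev l) = 0 \<longrightarrow> (\<forall>l\<in>L. c l = 0)"
  using assms
proof (induction L rule: finite_induct)
  case empty then show ?case by simp
next
  case (insert a L)
  have ea: "M *v ev a = a *s ev a" "ev a \<noteq> 0" using insert.prems by auto
  show ?case
  proof (intro allI impI)
    fix c assume s0: "(\<Sum>l\<in>insert a L. c l *s ev l) = 0"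
    then have e1: "c a *s ev a + (\<Sum>l\<in>L. c l *s ev l) = 0" using insert.hyps by simp
    have s1: "(\<Sum>l\<in>L. c l *s (M *v ev l)) = (\<Sum>l\<in>L. (c l * l) *s ev l)"
      by (rule sum.cong) (auto simp: insert.prems vector_smult_assoc)
    have "M *v (c a *s ev a + (\<Sum>l\<in>L. c l *s ev l)) = (c a * a) *s ev a + (\<Sum>l\<in>L. (c l * l) *s ev l)"
      by (simp only: matrix_vector_right_distrib mv_sum s1 mv_smult ea vector_smult_assoc)
    then have e2: "(c a * a) *s ev a + (\<Sum>l\<in>L. (c l * l) *s ev l) = 0" using e1 by simp
    have "a *s (c a *s ev a + (\<Sum>l\<in>L. c l *s ev l)) = (a * c a) *s ev a + (\<Sum>l\<in>L. (a * c l) *s ev l)"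
      by (simp only: vector_add_ldistrib smult_sum vector_smult_assoc)
    then have e3: "(a * c a) *s ev a + (\<Sum>l\<in>L. (a * c l) *s ev l) = 0" using e1 by simp
    have e4: "(\<Sum>l\<in>L. (c l * l) *s ev l) = (\<Sum>l\<in>L. (a * c l) *s ev l)"
    proof -
      have "(c a * a) *s ev a + (\<Sum>l\<in>L. (c l * l) *s ev l) = (c a * a) *s ev a + (\<Sum>l\<in>L. (a * c l) *s ev l)"
        using e2 e3 by (simp only: mult.commute[of "c a" a])
      then show ?thesis by (rule add_left_imp_eq)
    qed
    have "(\<Sum>l\<in>L. (c l * (l - a)) *s ev l) = (\<Sum>l\<in>L. (c l * l) *s ev l - (a * c l) *s ev l)"
    proof (rule sum.cong)
      fix l
      have "c l * (l - a) = c l * l - a * c l" by (simp add: algebra_simps)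
      then show "(c l * (l - a)) *s ev l = (c l * l) *s ev l - (a * c l) *s ev l"
        by (simp only: vector_sub_rdistrib)
    qed simp
    also have "\<dots> = (\<Sum>l\<in>L. (c l * l) *s ev l) - (\<Sum>l\<in>L. (a * c l) *s ev l)"
      by (rule sum_subtractf)
    also have "\<dots> = 0" using e4 by simp
    finally have z: "(\<Sum>l\<in>L. (\<lambda>l. c l * (l - a)) l *s ev l) = 0" .
    have IH: "\<forall>c. (\<Sum>l\<in>L. c l *s ev l) = 0 \<longrightarrow> (\<forall>l\<in>L. c l = 0)"
      using insert.IH insert.prems by simp
    have "\<forall>l\<in>L. c l * (l - a) = 0" using IH[rule_format, OF z] by simp
    then have cL: "\<forall>l\<in>L. c l = 0" using insert.hyps(2) by auto
    then have "(\<Sum>l\<in>L. c l *s ev l) = 0" by simp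
    then have "c a *s ev a = 0" using e1 by simp
    then have "c a = 0" using ea(2) by (auto simp: vec_eq_iff)
    then show "\<forall>l\<in>insert a L. c l = 0" using cL by simp
  qed
qed



lemma eigs_finite: "finite (eigs (A::real^'n^'n))"
proof (rule ccontr)
  assume "infinite (eigs A)"
  then obtain L where L: "finite L" "card L = Suc CARD('n)" "L \<subseteq> eigs A"
    using infinite_arbitrarily_large by metis
  define ev where "ev l = (SOME v. v \<noteq> 0 \<and> cmat A *v v = l *s v)" for l
  have ev: "ev l \<noteq> 0 \<and> cmat A *v ev l = l *s ev l" if "l \<in> L" for l
  proof -
    have "\<exists>v. v \<noteq> 0 \<and> cmat A *v v = l *s v" using that L(3) unfolding eigs_def by blast
    then show ?thesis unfolding ev_def by (rule someI_ex)
  qed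
  have ind: "\<forall>c. (\<Sum>l\<in>L. c l *s ev l) = 0 \<longrightarrow> (\<forall>l\<in>L. c l = 0)"
    by (rule eig_indep[OF L(1)]) (use ev in blast)
  have inj: "inj_on ev L"
  proof
    fix a b assume ab: "a \<in> L" "b \<in> L" "ev a = ev b"
    have "a *s ev a = b *s ev a" using ev[OF ab(1)] ev[OF ab(2)] ab(3) by metis
    then have "(a - b) *s ev a = 0" by (simp add: vector_sub_rdistrib)
    then show "a = b" using ev[OF ab(1)] by (auto simp: vec_eq_iff)
  qed
  have "vec.independent (ev ` L)"
    unfolding vec.independent_explicit
  proof (intro conjI allI impI ballI)
    show "finite (ev ` L)" using L(1) by simp
    fix c v assume s: "(\<Sum>v\<in>ev ` L. c v *s v) = 0" and v: "v \<in> ev ` L"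
    have "(\<Sum>l\<in>L. c (ev l) *s ev l) = 0" using s by (simp add: sum.reindex[OF inj])
    then show "c v = 0" using ind v by auto
  qed
  then have "card (ev ` L) \<le> vec.dim (UNIV :: (complex^'n) set)"
    using vec.independent_card_le_dim by blast
  also have "\<dots> = CARD('n)" by (simp add: vec.dim_UNIV card_cart_basis)
  finally show False using L(2) card_image[OF inj] by simp
qed

lemma sr_ge: "l \<in> eigs A \<Longrightarrow> cmod l \<le> spectral_radius A"
  unfolding sr_def2 using eigs_finite by (intro Max_ge) auto

lemma sr_le: "eigs A \<noteq> {} \<Longrightarrow> (\<And>l. l \<in> eigs A \<Longrightarrow> cmod l \<le> t) \<Longrightarrow> spectral_radius A \<le> t"
  unfolding sr_def2 using eigs_finite by (subst Max_le_iff) auto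

lemma sr_similar: fixes S :: "real^'n^'n" assumes "S ** X = Y ** S" "invertible S" shows "spectral_radius X = spectral_radius Y"
proof -
  obtain S' where S': "S ** S' = mat 1" "S' ** S = mat 1" using assms(2) invertible_def by blast
  have "S' ** Y = S' ** Y ** (S ** S')" using S' by simp
  also have "\<dots> = S' ** (S ** X) ** S'" by (simp add: assms(1) matrix_mul_assoc)
  also have "\<dots> = X ** S'" using S' by (simp add: matrix_mul_assoc)
  finally have "S' ** Y = X ** S'" .
  moreover have "invertible S'" using S' invertible_def by blast
  ultimately have "eigs X = eigs Y" using similar_eigs assms by (metis subset_antisym)
  then show ?thesis by (simp add: sr_def2)
qed



definition revv :: "complex^'n \<Rightarrow> real^'n" where "revv v = (\<chi> j. Re (v $ j))"
definition imv :: "complex^'n \<Rightarrow> real^'n" where "imv v = (\<chi> j. Im (v $ j))"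

lemma cmat_re: "Re ((cmat M *v v) $ i) = (M *v revv v) $ i"
  by (simp add: cmat_def revv_def matrix_vector_mult_def)

lemma cmat_im: "Im ((cmat M *v v) $ i) = (M *v imv v) $ i"
  by (simp add: cmat_def imv_def matrix_vector_mult_def)

lemma cmat_pow_eig: assumes "cmat B *v v = l *s v" shows "cmat (matpow B k) *v v = l ^ k *s v"
proof (induction k)
  case 0 then show ?case by (simp add: cmat_one)
next
  case (Suc k)
  have "cmat (matpow B (Suc k)) *v v = cmat B *v (cmat (matpow B k) *v v)"
    by (simp add: cmat_mult matrix_vector_mul_assoc)
  also have "\<dots> = l ^ Suc k *s v" using Suc assms by (simp add: mv_smult vector_smult_assoc mult.commute)
  finally show ?case .
qed

lemma pow_bound_vec: assumes K: "proper_cone K" and B: "K_nonneg K B" and y: "y \<in> interior K"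
  and t: "t *\<^sub>R y - B *v y \<in> K" and t0: "t \<ge> 0"
  shows "\<exists>C. \<forall>k. norm (matpow B k *v w) \<le> C * t ^ k"
proof -
  have yK: "y \<in> K" using y interior_subset by blast
  have pw: "t ^ k *\<^sub>R y - matpow B k *v y \<in> K" for k
  proof (induction k)
    case 0 then show ?case using pc_zero[OF K] by simp
  next
    case (Suc k)
    have "t ^ Suc k *\<^sub>R y - matpow B (Suc k) *v y
        = B *v (t ^ k *\<^sub>R y - matpow B k *v y) + t ^ k *\<^sub>R (t *\<^sub>R y - B *v y)"
      by (simp add: matrix_vector_mult_diff_distrib matrix_vector_mul_assoc matrix_vector_mult_scaleR algebra_simps)
    also have "\<dots> \<in> K" using Suc B t t0 by (intro pc_add[OF K] pc_scale[OF K]) (auto simp: K_nonneg_def)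
    finally show ?case .
  qed
  obtain N where N: "N > 0" "\<And>a z. a - z \<in> K \<Longrightarrow> a + z \<in> K \<Longrightarrow> norm z \<le> N * norm a"
    using pc_normal[OF K] by blast
  obtain c where c: "c > 0" "c *\<^sub>R y - w \<in> K" "c *\<^sub>R y + w \<in> K" using pc_dominate[OF K y] by blast
  have "norm (matpow B k *v w) \<le> (N * c * norm y) * t ^ k" for k
  proof -
    let ?a = "(c * t ^ k) *\<^sub>R y" and ?z = "matpow B k *v w"
    have "?a - ?z = c *\<^sub>R (t ^ k *\<^sub>R y - matpow B k *v y) + matpow B k *v (c *\<^sub>R y - w)"
      by (simp add: matrix_vector_mult_diff_distrib matrix_vector_mult_scaleR algebra_simps)
    also have "\<dots> \<in> K" using pw c Kn_pow[OF B] by (intro pc_add[OF K] pc_scale[OF K]) (auto simp: K_nonneg_def)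
    finally have 1: "?a - ?z \<in> K" .
    have "?a + ?z = c *\<^sub>R (t ^ k *\<^sub>R y - matpow B k *v y) + matpow B k *v (c *\<^sub>R y + w)"
      by (simp add: matrix_vector_right_distrib matrix_vector_mult_diff_distrib matrix_vector_mult_scaleR algebra_simps)
    also have "\<dots> \<in> K" using pw c Kn_pow[OF B] by (intro pc_add[OF K] pc_scale[OF K]) (auto simp: K_nonneg_def)
    finally have 2: "?a + ?z \<in> K" .
    have "norm ?z \<le> N * norm ?a" using N(2)[OF 1 2] .
    also have "\<dots> = (N * c * norm y) * t ^ k" using c t0 by (simp add: abs_mult)
    finally show ?thesis .
  qed
  then show ?thesis by blast
qed

lemma L0: assumes K: "proper_cone K" and B: "K_nonneg K B" and y: "y \<in> interior K"
  and t: "t *\<^sub>R y - B *v y \<in> K" and l: "l \<in> eigs B"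
  shows "cmod l \<le> t"
proof -
  have yK: "y \<in> K" using y interior_subset by blast
  have ynz: "y \<noteq> 0" using pc_int_nz[OF K y] .
  have t0: "t \<ge> 0"
  proof (rule ccontr)
    assume "\<not> t \<ge> 0"
    have "t *\<^sub>R y = (t *\<^sub>R y - B *v y) + B *v y" by simp
    also have "\<dots> \<in> K" using t B yK by (intro pc_add[OF K]) (auto simp: K_nonneg_def)
    finally have tyK: "t *\<^sub>R y \<in> K" .
    have "0 \<le> -1/t" using \<open>\<not> t \<ge> 0\<close> by simp
    from pc_scale[OF K tyK this] have "(-1/t) *\<^sub>R (t *\<^sub>R y) \<in> K" .
    moreover have "(-1/t) *\<^sub>R (t *\<^sub>R y) = -y" using \<open>\<not> t \<ge> 0\<close> by simp
    ultimately have "-y \<in> K" by simp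
    then show False using pc_pointed[OF K yK] ynz by simp
  qed
  obtain v where v: "v \<noteq> 0" "cmat B *v v = l *s v" using l unfolding eigs_def by blast
  obtain i where i: "v $ i \<noteq> 0" using v(1) by (metis vec_eq_iff zero_index)
  obtain C1 where C1: "\<And>k. norm (matpow B k *v revv v) \<le> C1 * t ^ k"
    using pow_bound_vec[OF K B y t t0] by blast
  obtain C2 where C2: "\<And>k. norm (matpow B k *v imv v) \<le> C2 * t ^ k"
    using pow_bound_vec[OF K B y t t0] by blast
  have bd: "cmod l ^ k * cmod (v $ i) \<le> (C1 + C2) * t ^ k" for k
  proof -
    have "cmod l ^ k * cmod (v $ i) = cmod ((cmat (matpow B k) *v v) $ i)"
      using cmat_pow_eig[OF v(2), of k] by (simp add: norm_mult norm_power)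
    also have "\<dots> \<le> \<bar>Re ((cmat (matpow B k) *v v) $ i)\<bar> + \<bar>Im ((cmat (matpow B k) *v v) $ i)\<bar>"
      by (rule cmod_le)
    also have "\<dots> \<le> norm (matpow B k *v revv v) + norm (matpow B k *v imv v)"
      unfolding cmat_re cmat_im by (intro add_mono component_le_norm_cart)
    also have "\<dots> \<le> (C1 + C2) * t ^ k" using C1[of k] C2[of k] by (simp add: algebra_simps)
    finally show ?thesis .
  qed
  have a0: "cmod (v $ i) > 0" using i by simp
  show ?thesis
  proof (rule ccontr)
    assume nl: "\<not> cmod l \<le> t"
    show False
    proof (cases "t = 0")
      case True
      have "cmod l * cmod (v $ i) \<le> 0" using bd[of 1] True by simp
      moreover have "cmod l * cmod (v $ i) > 0" using nl True a0 by simp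
      ultimately show False by simp
    next
      case False
      then have tp: "t > 0" using t0 by simp
      have q1: "1 < cmod l / t" using nl tp by (simp add: divide_simps)
      obtain n where n: "(C1 + C2) / cmod (v $ i) < (cmod l / t) ^ n"
        using real_arch_pow[OF q1] by blast
      have "(cmod l / t) ^ n * cmod (v $ i) = cmod l ^ n * cmod (v $ i) / t ^ n"
        by (simp add: power_divide)
      also have "\<dots> \<le> (C1 + C2)" using bd[of n] tp by (simp add: divide_simps)
      finally have "(cmod l / t) ^ n \<le> (C1 + C2) / cmod (v $ i)" using a0 by (simp add: divide_simps)
      then show False using n by simp
    qed
  qed
qed



lemma PF_step: assumes K: "proper_cone K" and B: "K_nonneg K B" and e: "e \<in> interior K"
  and CB: "\<And>x. norm (B *v x) \<le> norm x * CB" and eps: "0 < \<epsilon>" "\<epsilon> \<le> 1"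
  shows "\<exists>x m. x \<in> interior K \<and> x \<in> K \<and> norm x = 1 \<and> 0 \<le> m \<and> m \<le> CB + norm e
     \<and> B *v x + \<epsilon> *\<^sub>R e = m *\<^sub>R x"
proof -
  define S where "S = K \<inter> cball 0 1"
  define g where "g x = B *v x + \<epsilon> *\<^sub>R e" for x
  define f where "f x = inverse (norm (g x)) *\<^sub>R g x" for x
  have eK: "e \<in> K" using e interior_subset by blast
  have gint: "g x \<in> interior K" if "x \<in> K" for x
    unfolding g_def using that B by (intro pc_int_add[OF K] pc_int_scale[OF K eps(1) e]) (auto simp: K_nonneg_def)
  have gnz: "g x \<noteq> 0" if "x \<in> K" for x using pc_int_nz[OF K gint[OF that]] .
  have cS: "compact S" unfolding S_def by (intro closed_Int_compact pc_closed[OF K] compact_cball)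
  have vS: "convex S" unfolding S_def by (intro convex_Int pc_convex[OF K] convex_cball)
  have nS: "S \<noteq> {}" unfolding S_def using pc_zero[OF K] by auto
  have clin: "continuous_on S ((*v) B)" by (intro linear_continuous_on matrix_vector_mul_bounded_linear)
  have cg: "continuous_on S g" unfolding g_def by (intro continuous_intros clin)
  have cf: "continuous_on S f" unfolding f_def
    by (intro continuous_intros cg) (auto simp: S_def gnz)
  have fS: "f \<in> S \<rightarrow> S"
  proof
    fix x assume x: "x \<in> S"
    then have "x \<in> K" by (simp add: S_def)
    then have "f x \<in> K" unfolding f_def using gint interior_subset
      by (intro pc_scale[OF K]) auto
    moreover have "norm (f x) = 1" unfolding f_def using gnz \<open>x \<in> K\<close> by simp
    ultimately show "f x \<in> S" by (simp add: S_def)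
  qed
  obtain x where x: "x \<in> S" "f x = x" using brouwer[OF cS vS nS cf fS] by blast
  have xK: "x \<in> K" using x by (simp add: S_def)
  define m where "m = norm (g x)"
  have mp: "m > 0" using gnz[OF xK] by (simp add: m_def)
  have xe: "x = inverse m *\<^sub>R g x" using x(2) unfolding f_def m_def by simp
  have eq: "m *\<^sub>R x = g x"
  proof -
    have "m *\<^sub>R x = (m * inverse m) *\<^sub>R g x" by (subst xe) simp
    then show ?thesis using mp by simp
  qed
  have nx: "norm x = 1"
  proof -
    have "norm x = inverse m * m" by (subst xe) (simp add: m_def)
    then show ?thesis using mp by simp
  qed
  have xi: "x \<in> interior K"
  proof -
    have "inverse m *\<^sub>R g x \<in> interior K" using pc_int_scale[OF K _ gint[OF xK]] mp by simp
    then show ?thesis using xe by simp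
  qed
  have "m \<le> norm (B *v x) + norm (\<epsilon> *\<^sub>R e)" unfolding m_def g_def by (rule norm_triangle_ineq)
  also have "\<dots> \<le> CB + norm e" using CB[of x] nx eps mult_left_le_one_le[of "norm e" \<epsilon>] by simp
  finally have mb: "m \<le> CB + norm e" .
  show ?thesis using xi xK nx mp mb eq unfolding g_def by (intro exI[of _ x] exI[of _ m]) auto
qed



lemma PF: fixes K :: "(real^'n) set" assumes K: "proper_cone K" and B: "K_nonneg K B"
  shows "0 \<le> spectral_radius B \<and> eigs B \<noteq> {}
    \<and> (\<exists>x. x \<in> K \<and> x \<noteq> 0 \<and> B *v x = spectral_radius B *\<^sub>R x)
    \<and> (\<forall>t > spectral_radius B. \<exists>y \<in> interior K. t *\<^sub>R y - B *v y \<in> K)"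
proof -
  obtain e where e: "e \<in> interior K" using pc_int_ne[OF K] by blast
  have eK: "e \<in> K" using e interior_subset by blast
  obtain CB where CB: "\<And>x. norm (B *v x) \<le> norm x * CB"
    using bounded_linear.bounded[OF matrix_vector_mul_bounded_linear] by blast
  define eps where "eps k = inverse (real (Suc k))" for k
  have epsp: "0 < eps k" "eps k \<le> 1" for k by (auto simp: eps_def field_simps)
  have "\<forall>k. \<exists>x m. x \<in> interior K \<and> x \<in> K \<and> norm x = 1 \<and> 0 \<le> m \<and> m \<le> CB + norm e
     \<and> B *v x + eps k *\<^sub>R e = m *\<^sub>R x"
    using PF_step[OF K B e CB epsp] by blast
  then obtain X M where XM: "\<And>k. X k \<in> interior K" "\<And>k. X k \<in> K" "\<And>k. norm (X k) = 1"
    "\<And>k. 0 \<le> M k" "\<And>k. M k \<le> CB + norm e" "\<And>k. B *v X k + eps k *\<^sub>R e = M k *\<^sub>R X k"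
    by metis
  define S where "S = sphere (0::real^'n) 1 \<times> {0..CB + norm e}"
  have cS: "compact S" unfolding S_def by (intro compact_Times compact_sphere compact_Icc)
  have inS: "(X k, M k) \<in> S" for k using XM by (simp add: S_def)
  obtain l r where l: "l \<in> S" and r: "strict_mono r" and lim: "((\<lambda>k. (X k, M k)) \<circ> r) \<longlonglongrightarrow> l"
    using compact_imp_seq_compact[OF cS] inS unfolding seq_compact_def by metis
  obtain x0 \<mu> where l0: "l = (x0, \<mu>)" by (cases l)
  have limX: "(\<lambda>k. X (r k)) \<longlonglongrightarrow> x0" using tendsto_fst[OF lim] l0 by (simp add: o_def)
  have limM: "(\<lambda>k. M (r k)) \<longlonglongrightarrow> \<mu>" using tendsto_snd[OF lim] l0 by (simp add: o_def)
  have limE: "(\<lambda>k. eps (r k)) \<longlonglongrightarrow> 0"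
    using LIMSEQ_subseq_LIMSEQ[OF LIMSEQ_inverse_real_of_nat r] by (simp add: o_def eps_def)
  have x0n: "norm x0 = 1" and mu0: "0 \<le> \<mu>" using l l0 by (auto simp: S_def)
  have x0K: "x0 \<in> K"
    using closed_sequentially[OF pc_closed[OF K], of "\<lambda>k. X (r k)"] XM(2) limX by blast
  have l1: "(\<lambda>k. B *v X (r k) + eps (r k) *\<^sub>R e) \<longlonglongrightarrow> B *v x0 + 0 *\<^sub>R e"
    by (intro tendsto_intros bounded_linear.tendsto[OF matrix_vector_mul_bounded_linear] limX limE)
  have l2: "(\<lambda>k. M (r k) *\<^sub>R X (r k)) \<longlonglongrightarrow> \<mu> *\<^sub>R x0"
    by (intro tendsto_intros limX limM)
  have Bx0: "B *v x0 = \<mu> *\<^sub>R x0" using LIMSEQ_unique[OF l1] l2 XM(6) by simp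
  have x0nz: "x0 \<noteq> 0" using x0n by auto
  have ebound: "cmod l \<le> \<mu>" if "l \<in> eigs B" for l
  proof -
    have "cmod l \<le> M k" for k
    proof (rule L0[OF K B XM(1)[of k] _ that])
      have "M k *\<^sub>R X k - B *v X k = eps k *\<^sub>R e" using XM(6)[of k] by (simp add: algebra_simps)
      then show "M k *\<^sub>R X k - B *v X k \<in> K" using pc_scale[OF K eK, of "eps k"] epsp(1)[of k] by simp
    qed
    then show ?thesis using LIMSEQ_le_const[OF limM] by blast
  qed
  have mue: "complex_of_real \<mu> \<in> eigs B" using real_eig[OF x0nz Bx0] .
  have sr: "spectral_radius B = \<mu>"
    unfolding sr_def2
  proof (rule Max_eqI)
    show "finite (cmod ` eigs B)" by (rule finite_imageI[OF eigs_finite])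
    show "\<And>y. y \<in> cmod ` eigs B \<Longrightarrow> y \<le> \<mu>" using ebound by auto
    show "\<mu> \<in> cmod ` eigs B" using mue mu0 by (metis abs_of_nonneg image_eqI norm_of_real)
  qed
  have pf2: "\<exists>y \<in> interior K. t *\<^sub>R y - B *v y \<in> K" if t: "t > \<mu>" for t
  proof -
    have "eventually (\<lambda>k. M (r k) < t) sequentially" using order_tendstoD(2)[OF limM t] .
    then obtain N where N: "M (r N) < t" by (auto simp: eventually_sequentially)
    let ?k = "r N"
    have "t *\<^sub>R X ?k - B *v X ?k = (t - M ?k) *\<^sub>R X ?k + eps ?k *\<^sub>R e"
      using XM(6)[of ?k] by (simp add: algebra_simps)
    also have "\<dots> \<in> K" using N XM(2) epsp(1)[of ?k] eK by (intro pc_add[OF K] pc_scale[OF K]) auto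
    finally show ?thesis using XM(1) by blast
  qed
  show ?thesis using sr mu0 mue x0K x0nz Bx0 pf2 by auto
qed

lemma L: fixes K :: "(real^'n) set" assumes K: "proper_cone K" and B: "K_nonneg K B" and y: "y \<in> interior K"
  and t: "t *\<^sub>R y - B *v y \<in> K"
  shows "spectral_radius B \<le> t"
  using PF[OF K B] L0[OF K B y t] by (intro sr_le) auto

lemma pw_lemma: fixes K :: "(real^'n) set" assumes K: "proper_cone K" and B: "K_nonneg K B"
  and t: "t *\<^sub>R y - B *v y \<in> K" and t0: "t \<ge> 0"
  shows "t ^ k *\<^sub>R y - matpow B k *v y \<in> K"
proof (induction k)
  case 0 then show ?case using pc_zero[OF K] by simp
next
  case (Suc k)
  have "t ^ Suc k *\<^sub>R y - matpow B (Suc k) *v y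
      = B *v (t ^ k *\<^sub>R y - matpow B k *v y) + t ^ k *\<^sub>R (t *\<^sub>R y - B *v y)"
    by (simp add: matrix_vector_mult_diff_distrib matrix_vector_mul_assoc matrix_vector_mult_scaleR algebra_simps)
  also have "\<dots> \<in> K" using Suc B t t0 by (intro pc_add[OF K] pc_scale[OF K]) (auto simp: K_nonneg_def)
  finally show ?case .
qed

lemma pw_lemma2: fixes K :: "(real^'n) set" assumes K: "proper_cone K" and B: "K_nonneg K B"
  and t: "B *v y - t *\<^sub>R y \<in> K" and t0: "t \<ge> 0"
  shows "matpow B k *v y - t ^ k *\<^sub>R y \<in> K"
proof (induction k)
  case 0 then show ?case using pc_zero[OF K] by simp
next
  case (Suc k)
  have "matpow B (Suc k) *v y - t ^ Suc k *\<^sub>R y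
      = B *v (matpow B k *v y - t ^ k *\<^sub>R y) + t ^ k *\<^sub>R (B *v y - t *\<^sub>R y)"
    by (simp add: matrix_vector_mult_diff_distrib matrix_vector_mul_assoc matrix_vector_mult_scaleR algebra_simps)
  also have "\<dots> \<in> K" using Suc B t t0 by (intro pc_add[OF K] pc_scale[OF K]) (auto simp: K_nonneg_def)
  finally show ?case .
qed

lemma LCW: fixes K :: "(real^'n) set" assumes K: "proper_cone K" and B: "K_nonneg K B" and z: "z \<in> K" "z \<noteq> 0"
  and r: "B *v z - r *\<^sub>R z \<in> K" and r0: "r \<ge> 0"
  shows "r \<le> spectral_radius B"
proof (rule ccontr)
  assume "\<not> r \<le> spectral_radius B"
  then have lt: "spectral_radius B < r" by simp
  have sr0: "0 \<le> spectral_radius B" using PF[OF K B] by blast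
  define t where "t = (spectral_radius B + r) / 2"
  have t: "spectral_radius B < t" "t < r" "0 < t" using lt sr0 by (auto simp: t_def)
  obtain y where y: "y \<in> interior K" "t *\<^sub>R y - B *v y \<in> K" using PF[OF K B] t(1) by blast
  obtain c where c: "c > 0" "c *\<^sub>R y - z \<in> K" using pc_dominate[OF K y(1)] by blast
  have rp: "r > 0" using t by simp
  have mem: "(c * (t / r) ^ k) *\<^sub>R y - z \<in> K" for k
  proof -
    have "(c * t ^ k) *\<^sub>R y - r ^ k *\<^sub>R z
       = c *\<^sub>R (t ^ k *\<^sub>R y - matpow B k *v y) + matpow B k *v (c *\<^sub>R y - z)
         + (matpow B k *v z - r ^ k *\<^sub>R z)"
      by (simp add: matrix_vector_mult_diff_distrib matrix_vector_mult_scaleR algebra_simps)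
    also have "\<dots> \<in> K"
      using pw_lemma[OF K B y(2)] t c pw_lemma2[OF K B r r0] Kn_pow[OF B]
      by (intro pc_add[OF K] pc_scale[OF K]) (auto simp: K_nonneg_def)
    finally have "(1 / r ^ k) *\<^sub>R ((c * t ^ k) *\<^sub>R y - r ^ k *\<^sub>R z) \<in> K"
      using rp by (intro pc_scale[OF K]) auto
    then show ?thesis using rp by (simp add: scaleR_diff_right power_divide)
  qed
  have "(\<lambda>k. (c * (t / r) ^ k) *\<^sub>R y - z) \<longlonglongrightarrow> (c * 0) *\<^sub>R y - z"
    using t by (intro tendsto_intros LIMSEQ_power_zero) auto
  then have "-z \<in> K" using closed_sequentially[OF pc_closed[OF K]] mem by fastforce
  then show False using pc_pointed[OF K z(1)] z(2) by simp
qed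

lemma inv_int: fixes K :: "(real^'n) set" assumes K: "proper_cone K" and M: "invertible M" "K_nonneg K M" and y: "y \<in> interior K"
  shows "M *v y \<in> interior K"
proof -
  obtain d where d: "d > 0" "ball y d \<subseteq> K" using y mem_interior by blast
  define Mi where "Mi = matrix_inv M"
  have MMi: "M ** Mi = mat 1" "Mi ** M = mat 1" using minv[OF M(1)] by (auto simp: Mi_def)
  obtain C where C: "C > 0" "\<And>x. norm (Mi *v x) \<le> norm x * C"
    using bounded_linear.pos_bounded[OF matrix_vector_mul_bounded_linear] by blast
  have "ball (M *v y) (d / C) \<subseteq> K"
  proof
    fix w assume w: "w \<in> ball (M *v y) (d / C)"
    have "Mi *v w - y = Mi *v (w - M *v y)"
      using MMi by (simp add: matrix_vector_mult_diff_distrib matrix_vector_mul_assoc)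
    then have "norm (Mi *v w - y) \<le> norm (w - M *v y) * C" using C(2) by simp
    also have "\<dots> < d" using w C(1) by (simp add: dist_norm norm_minus_commute divide_simps)
    finally have "Mi *v w \<in> ball y d" by (simp add: dist_norm norm_minus_commute)
    then have "Mi *v w \<in> K" using d by blast
    then have "M *v (Mi *v w) \<in> K" using M(2) by (simp add: K_nonneg_def)
    then show "w \<in> K" using MMi by (simp add: matrix_vector_mul_assoc)
  qed
  then show ?thesis using d C mem_interior by (metis divide_pos_pos)
qed



lemma matpow_comm: "matpow A k ** A = A ** matpow A k"
  by (induction k) (simp_all add: matrix_mul_assoc[symmetric])

lemma matpow_Suc': "matpow A (Suc k) = matpow A k ** A"
  by (simp add: matpow_comm)

lemma GEN:
  fixes K :: "(real^'n) set" and A U V F G T Th Pinv :: "real^'n^'n" and s :: nat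
  assumes K: "proper_cone K"
    and Amon: "K_monotone K A"
    and spl: "K_regular_splitting K A U V"
    and spl1: "K_weak_regular_splitting_II K U F G"
    and comm: "V ** matrix_inv F ** G = G ** matrix_inv F ** V"
    and s: "s \<ge> 1"
    and T_def: "T = matpow (matrix_inv F ** G) s
      + (\<Sum>j<s. matpow (matrix_inv F ** G) j ** matrix_inv F ** V)"
    and Th_def: "Th = matpow (G ** matrix_inv F) s
      + (\<Sum>j<s. matpow (G ** matrix_inv F) j ** V ** matrix_inv F)"
    and Pinv_def: "Pinv = (\<Sum>j<s. matpow (matrix_inv F ** G) j ** matrix_inv F)"
  shows "K_nonneg K Th" "K_nonneg K Pinv" "Th = mat 1 - A ** Pinv" "T = mat 1 - Pinv ** A"
    "U ** Pinv = mat 1 - matpow (G ** matrix_inv F) s" "spectral_radius Th < 1" "invertible Pinv"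
    "spectral_radius T = spectral_radius Th"
proof -
  define Fi where "Fi = matrix_inv F"
  define H where "H = Fi ** G"
  define Kh where "Kh = G ** Fi"
  have T_def': "T = matpow H s + (\<Sum>j<s. matpow H j ** Fi ** V)" using T_def by (simp add: H_def Fi_def)
  have Th_def': "Th = matpow Kh s + (\<Sum>j<s. matpow Kh j ** V ** Fi)" using Th_def by (simp add: Kh_def Fi_def)
  have Pinv_def': "Pinv = (\<Sum>j<s. matpow H j ** Fi)" using Pinv_def by (simp add: H_def Fi_def)
  have invF: "invertible F" and Fin: "K_nonneg K Fi" and Khn: "K_nonneg K Kh" and UFG: "U = F - G"
    using spl1 by (auto simp: K_weak_regular_splitting_II_def Fi_def Kh_def)
  have FFi: "F ** Fi = mat 1" "Fi ** F = mat 1" using minv[OF invF] by (auto simp: Fi_def)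
  have Vn: "K_nonneg K V" and AUV: "A = U - V" using spl by (auto simp: K_regular_splitting_def)
  have invA: "invertible A" and Ain: "K_nonneg K (matrix_inv A)" using Amon by (auto simp: K_monotone_def)
  have AAi: "A ** matrix_inv A = mat 1" "matrix_inv A ** A = mat 1" using minv[OF invA] by auto
  have p1: "matpow H j ** Fi = Fi ** matpow Kh j" for j
  proof (induction j)
    case 0 then show ?case by simp
  next
    case (Suc j)
    have "matpow H (Suc j) ** Fi = H ** (matpow H j ** Fi)" by (simp add: matrix_mul_assoc)
    also have "\<dots> = H ** (Fi ** matpow Kh j)" using Suc by simp
    also have "\<dots> = Fi ** (Kh ** matpow Kh j)" by (simp add: matrix_mul_assoc H_def Kh_def)
    finally show ?case by simp
  qed
  have KV: "Kh ** V = V ** H" using comm by (simp add: Kh_def H_def Fi_def matrix_mul_assoc)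
  have p2: "matpow Kh j ** V = V ** matpow H j" for j
  proof (induction j)
    case 0 then show ?case by simp
  next
    case (Suc j)
    have "matpow Kh (Suc j) ** V = Kh ** (matpow Kh j ** V)" by (simp add: matrix_mul_assoc)
    also have "\<dots> = (Kh ** V) ** matpow H j" using Suc by (simp add: matrix_mul_assoc)
    also have "\<dots> = V ** matpow H (Suc j)" using KV by (simp add: matrix_mul_assoc)
    finally show ?case .
  qed
  have PinvF: "Pinv = (\<Sum>j<s. Fi ** matpow Kh j)" unfolding Pinv_def' using p1 by simp
  have tel1: "Pinv ** U = mat 1 - matpow H s"
  proof -
    have "Pinv ** U = (\<Sum>j<s. matpow H j - matpow H (Suc j))"
      unfolding Pinv_def' mm_sum_r
    proof (rule sum.cong)
      fix j
      have "matpow H j ** Fi ** U = matpow H j ** (Fi ** F - Fi ** G)"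
        by (simp add: UFG mm_diff_l matrix_mul_assoc)
      also have "\<dots> = matpow H j - matpow H (Suc j)"
        by (simp add: FFi mm_diff_l matpow_comm flip: H_def)
      finally show "matpow H j ** Fi ** U = matpow H j - matpow H (Suc j)" .
    qed simp
    also have "\<dots> = mat 1 - matpow H s" using sum_lessThan_telescope'[of "matpow H" s] by simp
    finally show ?thesis .
  qed
  have tel2: "U ** Pinv = mat 1 - matpow Kh s"
  proof -
    have "U ** Pinv = (\<Sum>j<s. matpow Kh j - matpow Kh (Suc j))"
      unfolding PinvF mm_sum_l
    proof (rule sum.cong)
      fix j
      have "U ** (Fi ** matpow Kh j) = (F ** Fi - G ** Fi) ** matpow Kh j"
        by (simp add: UFG mm_diff_r matrix_mul_assoc)
      also have "\<dots> = matpow Kh j - matpow Kh (Suc j)"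
        by (simp add: FFi mm_diff_r Kh_def)
      finally show "U ** (Fi ** matpow Kh j) = matpow Kh j - matpow Kh (Suc j)" .
    qed simp
    also have "\<dots> = mat 1 - matpow Kh s" using sum_lessThan_telescope'[of "matpow Kh" s] by simp
    finally show ?thesis .
  qed
  show "U ** Pinv = mat 1 - matpow (G ** matrix_inv F) s" using tel2 by (simp add: Kh_def Fi_def)
  have PV: "Pinv ** V = (\<Sum>j<s. matpow H j ** Fi ** V)" unfolding Pinv_def' mm_sum_r ..
  show Teq: "T = mat 1 - Pinv ** A"
    unfolding T_def' AUV mm_diff_l tel1 PV by simp
  have VP: "V ** Pinv = (\<Sum>j<s. matpow Kh j ** V ** Fi)"
    unfolding Pinv_def' mm_sum_l
    by (rule sum.cong) (simp_all add: p2 matrix_mul_assoc)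
  show Theq: "Th = mat 1 - A ** Pinv"
    unfolding Th_def' AUV mm_diff_r tel2 VP by simp
  show Thn: "K_nonneg K Th"
    unfolding Th_def' using Khn Vn Fin
    by (intro Kn_add[OF K] Kn_sum[OF K] Kn_mult Kn_pow) auto
  show Pn: "K_nonneg K Pinv"
    unfolding PinvF using Khn Fin by (intro Kn_sum[OF K] Kn_mult Kn_pow) auto
  have sim: "Fi ** Th = T ** Fi"
  proof -
    have "Fi ** Th = Fi ** matpow Kh s + (\<Sum>j<s. Fi ** (matpow Kh j ** V ** Fi))"
      unfolding Th_def' matrix_add_ldistrib mm_sum_l ..
    also have "\<dots> = matpow H s ** Fi + (\<Sum>j<s. matpow H j ** Fi ** V ** Fi)"
      by (simp add: p1 matrix_mul_assoc)
    also have "\<dots> = T ** Fi" unfolding T_def' mm_add_r mm_sum_r ..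
    finally show ?thesis .
  qed
  have invFi: "invertible Fi" using FFi invertible_def by blast
  show srT: "spectral_radius T = spectral_radius Th"
    using sr_similar[OF sim invFi] by simp
  obtain x where x: "x \<in> K" "x \<noteq> 0" "Th *v x = spectral_radius Th *\<^sub>R x"
    using PF[OF K Thn] by blast
  define r where "r = spectral_radius Th"
  show sr1: "spectral_radius Th < 1"
  proof (rule ccontr)
    assume "\<not> spectral_radius Th < 1"
    then have r1: "r \<ge> 1" by (simp add: r_def)
    have "A *v (Pinv *v x) = x - Th *v x" unfolding Theq
      by (simp add: matrix_vector_mult_diff_rdistrib matrix_vector_mul_assoc)
    also have "\<dots> = (1 - r) *\<^sub>R x" using x(3) by (simp add: r_def algebra_simps)
    finally have APx: "A *v (Pinv *v x) = (1 - r) *\<^sub>R x" .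
    have "Pinv *v x = matrix_inv A *v (A *v (Pinv *v x))" by (simp add: matrix_vector_mul_assoc matrix_mul_assoc AAi)
    also have "\<dots> = (1 - r) *\<^sub>R (matrix_inv A *v x)" by (simp add: APx matrix_vector_mult_scaleR)
    finally have "- (Pinv *v x) = (r - 1) *\<^sub>R (matrix_inv A *v x)" by (simp add: algebra_simps)
    also have "\<dots> \<in> K" using r1 Ain x(1) by (intro pc_scale[OF K]) (auto simp: K_nonneg_def)
    finally have mP: "- (Pinv *v x) \<in> K" .
    obtain s' where s': "s = Suc s'" using s by (cases s) auto
    define W where "W = (\<Sum>j<s'. Fi ** matpow Kh (Suc j))"
    have PW: "Pinv = Fi + W" unfolding PinvF s' W_def sum.lessThan_Suc_shift by simp
    have Wn: "K_nonneg K W" unfolding W_def using Khn Fin by (intro Kn_sum[OF K] Kn_mult Kn_pow) auto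
    have "- (Fi *v x) = - (Pinv *v x) + W *v x" by (simp add: PW matrix_vector_mult_add_rdistrib)
    also have "\<dots> \<in> K" using mP Wn x(1) by (intro pc_add[OF K]) (auto simp: K_nonneg_def)
    finally have "Fi *v x = 0" using pc_pointed[OF K] Fin x(1) by (auto simp: K_nonneg_def)
    then have "F *v (Fi *v x) = 0" by simp
    then have "x = 0" by (simp add: matrix_vector_mul_assoc FFi)
    then show False using x(2) by simp
  qed
  show "invertible Pinv"
  proof (rule invertible_ker)
    fix y assume y: "Pinv *v y = 0"
    have "Th *v y = y" unfolding Theq using y
      by (simp add: matrix_vector_mult_diff_rdistrib flip: matrix_vector_mul_assoc)
    show "y = 0"
    proof (rule ccontr)
      assume "y \<noteq> 0"
      then have "complex_of_real 1 \<in> eigs Th" using real_eig[of y Th 1] \<open>Th *v y = y\<close> by simp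
      then have "1 \<le> spectral_radius Th" using sr_ge by fastforce
      then show False using sr1 by simp
    qed
  qed
qed



theorem theorem3p10:
  fixes K :: "(real^'n) set" and A U V F G Fb Gb :: "real^'n^'n" and s :: nat
  assumes K: "proper_cone K"
    and Amon: "K_monotone K A"
    and spl: "K_regular_splitting K A U V"
    and spl1: "K_weak_regular_splitting_II K U F G"
    and spl2: "K_weak_regular_splitting_II K U Fb Gb"
    and comm1: "V ** matrix_inv F ** G = G ** matrix_inv F ** V"
    and comm2: "V ** matrix_inv Fb ** Gb = Gb ** matrix_inv Fb ** V"
    and s: "s \<ge> 1"
  defines "T \<equiv> matpow (matrix_inv F ** G) s
      + (\<Sum>j<s. matpow (matrix_inv F ** G) j ** matrix_inv F ** V)"
    and "Tb \<equiv> matpow (matrix_inv Fb ** Gb) s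
      + (\<Sum>j<s. matpow (matrix_inv Fb ** Gb) j ** matrix_inv Fb ** V)"
    and "Th \<equiv> matpow (G ** matrix_inv F) s
      + (\<Sum>j<s. matpow (G ** matrix_inv F) j ** V ** matrix_inv F)"
    and "Thb \<equiv> matpow (Gb ** matrix_inv Fb) s
      + (\<Sum>j<s. matpow (Gb ** matrix_inv Fb) j ** V ** matrix_inv Fb)"
    and "P \<equiv> matrix_inv (\<Sum>j<s. matpow (matrix_inv F ** G) j ** matrix_inv F)"
    and "Pb \<equiv> matrix_inv (\<Sum>j<s. matpow (matrix_inv Fb ** Gb) j ** matrix_inv Fb)"
  assumes cond: "(K_geq K (Gb ** matrix_inv Fb) (G ** matrix_inv F) \<and> K_nonneg K (Th ** P))
              \<or> K_geq K (Thb ** Pb) (Th ** P)"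
  shows "spectral_radius T \<le> spectral_radius Tb \<and> spectral_radius Tb < 1"
proof -
  define Pinv where "Pinv = (\<Sum>j<s. matpow (matrix_inv F ** G) j ** matrix_inv F)"
  define Pbinv where "Pbinv = (\<Sum>j<s. matpow (matrix_inv Fb ** Gb) j ** matrix_inv Fb)"
  note G1 = GEN[OF K Amon spl spl1 comm1 s, of T Th Pinv]
  note G2 = GEN[OF K Amon spl spl2 comm2 s, of Tb Thb Pbinv]
  have Thn: "K_nonneg K Th" and Pn: "K_nonneg K Pinv" and Theq: "Th = mat 1 - A ** Pinv"
    and Teq: "T = mat 1 - Pinv ** A" and UP: "U ** Pinv = mat 1 - matpow (G ** matrix_inv F) s"
    and sr1: "spectral_radius Th < 1" and invP: "invertible Pinv"
    and srT: "spectral_radius T = spectral_radius Th"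
    using G1 by (simp_all add: T_def Th_def Pinv_def)
  have Thbn: "K_nonneg K Thb" and Pbn: "K_nonneg K Pbinv" and Thbeq: "Thb = mat 1 - A ** Pbinv"
    and Tbeq: "Tb = mat 1 - Pbinv ** A" and UPb: "U ** Pbinv = mat 1 - matpow (Gb ** matrix_inv Fb) s"
    and sr2: "spectral_radius Thb < 1" and invPb: "invertible Pbinv"
    and srTb: "spectral_radius Tb = spectral_radius Thb"
    using G2 by (simp_all add: Tb_def Thb_def Pbinv_def)
  have PP: "P = matrix_inv Pinv" "Pb = matrix_inv Pbinv" by (simp_all add: P_def Pb_def Pinv_def Pbinv_def)
  have PPi: "Pinv ** P = mat 1" "P ** Pinv = mat 1" using minv[OF invP] PP by auto
  have PPbi: "Pbinv ** Pb = mat 1" "Pb ** Pbinv = mat 1" using minv[OF invPb] PP by auto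
  have Qeq: "Th ** P = P - A" unfolding Theq mm_diff_r
    by (simp add: matrix_mul_assoc[symmetric] PPi)
  have Qbeq: "Thb ** Pb = Pb - A" unfolding Thbeq mm_diff_r
    by (simp add: matrix_mul_assoc[symmetric] PPbi)
  have invA: "invertible A" and Ain: "K_nonneg K (matrix_inv A)" using Amon by (auto simp: K_monotone_def)
  have AAi: "A ** matrix_inv A = mat 1" "matrix_inv A ** A = mat 1" using minv[OF invA] by auto
  have invAi: "invertible (matrix_inv A)" using AAi invertible_def by blast
  have main: "spectral_radius T \<le> spectral_radius Tb"
    using cond
  proof
    assume ci: "K_geq K (Gb ** matrix_inv Fb) (G ** matrix_inv F) \<and> K_nonneg K (Th ** P)"
    have Khn: "K_nonneg K (G ** matrix_inv F)" using spl1 by (simp add: K_weak_regular_splitting_II_def)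
    have invU: "invertible U" and Uin: "K_nonneg K (matrix_inv U)" using spl by (auto simp: K_regular_splitting_def)
    have UUi: "matrix_inv U ** U = mat 1" using minv[OF invU] by auto
    have "Pinv - Pbinv = matrix_inv U ** (U ** Pinv - U ** Pbinv)"
      by (simp add: mm_diff_l matrix_mul_assoc UUi)
    also have "\<dots> = matrix_inv U ** (matpow (Gb ** matrix_inv Fb) s - matpow (G ** matrix_inv F) s)"
      by (simp add: UP UPb)
    finally have dP: "K_nonneg K (Pinv - Pbinv)"
      using Kn_mult[OF Uin Kn_geq_pow[OF K Khn ci[THEN conjunct1], of s, unfolded K_geq_def]] by simp
    have TPQ: "T = Pinv ** (Th ** P)" unfolding Qeq Teq mm_diff_l using PPi by simp
    have Tn: "K_nonneg K T" unfolding TPQ by (rule Kn_mult[OF Pn ci[THEN conjunct2]])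
    show "spectral_radius T \<le> spectral_radius Tb"
      unfolding srTb
    proof (rule dense_ge)
      fix t assume t: "spectral_radius Thb < t"
      obtain y where y: "y \<in> interior K" "t *\<^sub>R y - Thb *v y \<in> K" using PF[OF K Thbn] t by blast
      define w where "w = matrix_inv A *v y"
      have wi: "w \<in> interior K" unfolding w_def by (rule inv_int[OF K invAi Ain y(1)])
      have "t *\<^sub>R y - Thb *v y = A *v (Pbinv *v y) - (1 - t) *\<^sub>R y"
        unfolding Thbeq by (simp add: matrix_vector_mult_diff_rdistrib matrix_vector_mul_assoc algebra_simps)
      then have "matrix_inv A *v (A *v (Pbinv *v y) - (1 - t) *\<^sub>R y) \<in> K"
        using y(2) Ain by (simp add: K_nonneg_def)
      then have 1: "Pbinv *v y - (1 - t) *\<^sub>R w \<in> K"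
        by (simp add: w_def matrix_vector_mult_diff_distrib matrix_vector_mult_scaleR matrix_vector_mul_assoc matrix_mul_assoc AAi)
      have 2: "(Pinv - Pbinv) *v y \<in> K" using dP y(1) interior_subset by (auto simp: K_nonneg_def)
      have Ay': "A *v w = y" by (simp add: w_def matrix_vector_mul_assoc AAi)
      have Tw: "T *v w = w - Pinv *v y" unfolding Teq
        by (simp add: matrix_vector_mult_diff_rdistrib Ay' flip: matrix_vector_mul_assoc)
      have "t *\<^sub>R w - T *v w = (Pinv - Pbinv) *v y + (Pbinv *v y - (1 - t) *\<^sub>R w)"
        unfolding Tw by (simp add: matrix_vector_mult_diff_rdistrib algebra_simps)
      also have "\<dots> \<in> K" by (rule pc_add[OF K 2 1])
      finally have "t *\<^sub>R w - T *v w \<in> K" .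
      then show "spectral_radius T \<le> t" using L[OF K Tn wi] by blast
    qed
  next
    assume cii: "K_geq K (Thb ** Pb) (Th ** P)"
    obtain x where x: "x \<in> K" "x \<noteq> 0" "Th *v x = spectral_radius Th *\<^sub>R x"
      using PF[OF K Thn] by blast
    define r where "r = spectral_radius Th"
    have r0: "0 \<le> r" "r < 1" using PF[OF K Thn] sr1 by (auto simp: r_def)
    define y where "y = matrix_inv A *v x"
    have yK: "y \<in> K" using Ain x(1) by (simp add: y_def K_nonneg_def)
    have Ay: "A *v y = x" by (simp add: y_def matrix_vector_mul_assoc AAi)
    have "A *v (Pinv *v x) = x - Th *v x" unfolding Theq
      by (simp add: matrix_vector_mult_diff_rdistrib matrix_vector_mul_assoc)
    also have "\<dots> = (1 - r) *\<^sub>R x" using x(3) by (simp add: r_def algebra_simps)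
    finally have APx: "A *v (Pinv *v x) = (1 - r) *\<^sub>R x" .
    have Px: "Pinv *v x = (1 - r) *\<^sub>R y"
    proof -
      have "Pinv *v x = matrix_inv A *v (A *v (Pinv *v x))" by (simp add: matrix_vector_mul_assoc matrix_mul_assoc AAi)
      also have "\<dots> = (1 - r) *\<^sub>R y" by (simp add: APx matrix_vector_mult_scaleR y_def)
      finally show ?thesis .
    qed
    have Py: "P *v y = (1 / (1 - r)) *\<^sub>R x"
    proof -
      have "x = P *v (Pinv *v x)" by (simp add: matrix_vector_mul_assoc PPi)
      also have "\<dots> = (1 - r) *\<^sub>R (P *v y)" by (simp add: Px matrix_vector_mult_scaleR)
      finally have "(1 / (1 - r)) *\<^sub>R x = (1 / (1 - r)) *\<^sub>R ((1 - r) *\<^sub>R (P *v y))" by simp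
      then show ?thesis using r0 by simp
    qed
    define q where "q = (Th ** P) *v y"
    define qb where "qb = (Thb ** Pb) *v y"
    define d where "d = qb - q"
    have dK: "d \<in> K" using cii yK by (simp add: d_def q_def qb_def K_geq_def K_nonneg_def matrix_vector_mult_diff_rdistrib)
    have q: "q = (r / (1 - r)) *\<^sub>R x"
    proof -
      have "q = P *v y - A *v y" by (simp add: q_def Qeq matrix_vector_mult_diff_rdistrib)
      also have "\<dots> = (1 / (1 - r) - 1) *\<^sub>R x" by (simp add: Py Ay algebra_simps)
      also have "1 / (1 - r) - 1 = r / (1 - r)" using r0 by (simp add: field_simps)
      finally show ?thesis .
    qed
    define z where "z = Pb *v y"
    have z: "z = qb + x" by (simp add: z_def qb_def Qbeq matrix_vector_mult_diff_rdistrib Ay)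
    have Thbz: "Thb *v z = qb" by (simp add: z_def qb_def matrix_vector_mul_assoc)
    define c where "c = r / (1 - r) + 1"
    have c0: "c > 0" using r0 by (simp add: c_def add_nonneg_pos)
    have z2: "z = d + c *\<^sub>R x" by (simp add: z d_def q c_def algebra_simps)
    have zK: "z \<in> K" unfolding z2 using dK x(1) c0 by (intro pc_add[OF K] pc_scale[OF K]) auto
    have znz: "z \<noteq> 0"
    proof
      assume "z = 0"
      then have "d + c *\<^sub>R x = 0" unfolding z2 .
      then have "d = - (c *\<^sub>R x)" by (simp add: eq_neg_iff_add_eq_0)
      then have "-x = (1 / c) *\<^sub>R d" using c0 by simp
      also have "\<dots> \<in> K" using dK c0 by (intro pc_scale[OF K]) auto
      finally have "x = 0" using pc_pointed[OF K x(1)] by simp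
      then show False using x(2) by simp
    qed
    have "Thb *v z - r *\<^sub>R z = (1 - r) *\<^sub>R d"
    proof -
      have "Thb *v z - r *\<^sub>R z = (1 - r) *\<^sub>R qb - r *\<^sub>R x" unfolding Thbz by (simp add: z algebra_simps)
      also have "\<dots> = (1 - r) *\<^sub>R d + ((1 - r) * (r / (1 - r))) *\<^sub>R x - r *\<^sub>R x"
        by (simp add: d_def q algebra_simps)
      also have "(1 - r) * (r / (1 - r)) = r" using r0 by simp
      finally show ?thesis by simp
    qed
    also have "\<dots> \<in> K" using dK r0 by (intro pc_scale[OF K]) auto
    finally have "r \<le> spectral_radius Thb" using LCW[OF K Thbn zK znz _ r0(1)] by blast
    then show "spectral_radius T \<le> spectral_radius Tb" using srT srTb by (simp add: r_def)
  qed
  show ?thesis using main sr2 srTb by simp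
qed

end
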